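(* For any oriented graph $G$, $\chi^*_o(G) \geq \frac{|V(G)|}{\alpha_o(G)}$.
   Context: An oriented graph is a finite directed graph with no directed cycle of length 1 or 2. For a set $S$ of $k$ colors, a $b$-fold oriented $k$-coloring of $G$ is a map $f$ from $V(G)$ to the $b$-element subsets of $S$ such that (i) $f(x)\cap f(y)=\emptyset$ for every arc $xy$, and (ii) for all arcs $xy, zw$, $f(x)\cap f(w)\neq\emptyset$ implies $f(y)\cap f(z)=\emptyset$. $\chi^b_o(G)$ is the minimum such $k$, and $\chi^*_o(G)=\lim_{b\to\infty}\chi^b_o(G)/b=\inf_{b\ge1}\chi^b_o(G)/b$. An oriented coloring is a $1$-fold oriented coloring (viewed as a map to colors). A set $I\subseteq V(G)$ is an oriented independent set if for every two distinct $x,y\in I$ there is an oriented coloring $f$ of $G$ with $f(x)=f(y)$. The oriented independence number $\alpha_o(G)$ is the maximum size of an oriented independent set. *)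

theory Defs
  imports Complex_Main
begin

definition oriented_graph :: "'a set \<Rightarrow> ('a \<times> 'a) set \<Rightarrow> bool" where
  "oriented_graph V A \<longleftrightarrow> finite V \<and> A \<subseteq> V \<times> V \<and>
     (\<forall>x. (x, x) \<notin> A) \<and> (\<forall>x y. (x, y) \<in> A \<longrightarrow> (y, x) \<notin> A)"

definition bfold_oriented_coloring ::
  "'a set \<Rightarrow> ('a \<times> 'a) set \<Rightarrow> nat \<Rightarrow> nat \<Rightarrow> ('a \<Rightarrow> nat set) \<Rightarrow> bool" where
  "bfold_oriented_coloring V A b k f \<longleftrightarrow>
     (\<forall>x\<in>V. f x \<subseteq> {0..<k} \<and> card (f x) = b) \<and>
     (\<forall>x y. (x, y) \<in> A \<longrightarrow> f x \<inter> f y = {}) \<and>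
     (\<forall>x y z w. (x, y) \<in> A \<longrightarrow> (z, w) \<in> A \<longrightarrow> f x \<inter> f w \<noteq> {} \<longrightarrow> f y \<inter> f z = {})"

definition chi_o_b :: "nat \<Rightarrow> 'a set \<Rightarrow> ('a \<times> 'a) set \<Rightarrow> nat" where
  "chi_o_b b V A = (LEAST k. \<exists>f. bfold_oriented_coloring V A b k f)"

definition chi_o_frac :: "'a set \<Rightarrow> ('a \<times> 'a) set \<Rightarrow> real" where
  "chi_o_frac V A = (INF b\<in>{1..}. real (chi_o_b b V A) / real b)"

definition oriented_coloring :: "'a set \<Rightarrow> ('a \<times> 'a) set \<Rightarrow> ('a \<Rightarrow> nat) \<Rightarrow> bool" where
  "oriented_coloring V A f \<longleftrightarrow>
     (\<forall>x y. (x, y) \<in> A \<longrightarrow> f x \<noteq> f y) \<and>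
     (\<forall>x y z w. (x, y) \<in> A \<longrightarrow> (z, w) \<in> A \<longrightarrow> f x = f w \<longrightarrow> f y \<noteq> f z)"

definition oriented_independent :: "'a set \<Rightarrow> ('a \<times> 'a) set \<Rightarrow> 'a set \<Rightarrow> bool" where
  "oriented_independent V A I \<longleftrightarrow> I \<subseteq> V \<and>
     (\<forall>x\<in>I. \<forall>y\<in>I. x \<noteq> y \<longrightarrow> (\<exists>f. oriented_coloring V A f \<and> f x = f y))"

definition alpha_o :: "'a set \<Rightarrow> ('a \<times> 'a) set \<Rightarrow> nat" where
  "alpha_o V A = Max {card I | I. oriented_independent V A I}"

end

theory Submission
  imports Defs
begin

lemma bf1: "bfold_oriented_coloring V A b k f \<Longrightarrow> x \<in> V \<Longrightarrow> f x \<subseteq> {0..<k} \<and> card (f x) = b"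
  unfolding bfold_oriented_coloring_def by blast
lemma bf2: "bfold_oriented_coloring V A b k f \<Longrightarrow> (x, y) \<in> A \<Longrightarrow> f x \<inter> f y = {}"
  unfolding bfold_oriented_coloring_def by blast
lemma bf3: "bfold_oriented_coloring V A b k f \<Longrightarrow> (x, y) \<in> A \<Longrightarrow> (z, w) \<in> A \<Longrightarrow> f x \<inter> f w \<noteq> {} \<Longrightarrow> f y \<inter> f z = {}"
  unfolding bfold_oriented_coloring_def by blast

lemma select_coloring:
  assumes og: "oriented_graph V A" and f: "bfold_oriented_coloring V A b k f" and b: "b \<ge> 1"
    and g: "\<And>v. v \<in> V \<Longrightarrow> g v \<in> f v"
  shows "oriented_coloring V A g"
proof -
  have AV: "A \<subseteq> V \<times> V" using og by (simp add: oriented_graph_def)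
  show ?thesis unfolding oriented_coloring_def
  proof (intro conjI allI impI)
    fix x y assume xy: "(x, y) \<in> A"
    then have V: "x \<in> V" "y \<in> V" using AV by auto
    have "f x \<inter> f y = {}" using bf2[OF f xy] .
    then show "g x \<noteq> g y" using g[OF V(1)] g[OF V(2)] by (metis disjoint_iff)
  next
    fix x y z w assume xy: "(x, y) \<in> A" and zw: "(z, w) \<in> A" and e: "g x = g w"
    then have V: "x \<in> V" "y \<in> V" "z \<in> V" "w \<in> V" using AV by auto
    have "f x \<inter> f w \<noteq> {}" using g[OF V(1)] g[OF V(4)] e by (metis disjoint_iff)
    then have "f y \<inter> f z = {}" using bf3[OF f xy zw] by blast
    then show "g y \<noteq> g z" using g[OF V(2)] g[OF V(3)] by (metis disjoint_iff)
  qed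
qed

lemma color_class_indep:
  assumes og: "oriented_graph V A" and f: "bfold_oriented_coloring V A b k f" and b: "b \<ge> 1"
  shows "oriented_independent V A {v\<in>V. c \<in> f v}"
  unfolding oriented_independent_def
proof (intro conjI ballI impI)
  fix x y assume x: "x \<in> {v\<in>V. c \<in> f v}" and y: "y \<in> {v\<in>V. c \<in> f v}"
  define g where "g v = (if c \<in> f v then c else Min (f v))" for v
  have "g v \<in> f v" if "v \<in> V" for v
  proof -
    have "f v \<subseteq> {0..<k}" "card (f v) = b" using bf1[OF f that] by auto
    then have fin: "finite (f v)" using finite_subset by blast
    then have "f v \<noteq> {}" using b \<open>card (f v) = b\<close> by (metis card.empty not_one_le_zero)
    then show ?thesis unfolding g_def using fin by (simp add: Min_in)
  qed
  then have "oriented_coloring V A g" using select_coloring[OF og f b] by blast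
  moreover have "g x = g y" using x y unfolding g_def by auto
  ultimately show "\<exists>g. oriented_coloring V A g \<and> g x = g y" by blast
qed (rule Collect_restrict)

lemma card_le_alpha:
  assumes og: "oriented_graph V A" and I: "oriented_independent V A I"
  shows "card I \<le> alpha_o V A"
proof -
  have fin: "finite V" using og by (simp add: oriented_graph_def)
  have "{card I | I. oriented_independent V A I} \<subseteq> {0..card V}"
    using fin by (auto simp: oriented_independent_def intro: card_mono)
  then have "finite {card I | I. oriented_independent V A I}" using finite_subset by blast
  then show ?thesis unfolding alpha_o_def using I by (auto intro: Max_ge)
qed

lemma coloring_exists:
  assumes og: "oriented_graph V A"
  shows "\<exists>k f. bfold_oriented_coloring V A b k f"
proof -
  have fin: "finite V" using og by (simp add: oriented_graph_def)
  obtain i where i: "bij_betw i V {0..<card V}" using ex_bij_betw_finite_nat[OF fin] by blast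
  define f where "f v = {b * i v ..< b * i v + b}" for v
  have AV: "A \<subseteq> V \<times> V" using og by (simp add: oriented_graph_def)
  have dis: "f x \<inter> f y = {}" if "x \<in> V" "y \<in> V" "x \<noteq> y" for x y
  proof -
    have "i x \<noteq> i y" using i that by (metis bij_betw_inv_into_left)
    then have "i x < i y \<or> i y < i x" by arith
    then show ?thesis unfolding f_def
    proof
      assume "i x < i y" then have "b * i x + b \<le> b * i y"
        by (metis add.commute mult.commute mult_le_mono1 Suc_leI mult_Suc)
      then show "{b * i x..<b * i x + b} \<inter> {b * i y..<b * i y + b} = {}" by auto
    next
      assume "i y < i x" then have "b * i y + b \<le> b * i x"
        by (metis add.commute mult.commute mult_le_mono1 Suc_leI mult_Suc)
      then show "{b * i x..<b * i x + b} \<inter> {b * i y..<b * i y + b} = {}" by auto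
    qed
  qed
  have "bfold_oriented_coloring V A b (b * card V) f"
    unfolding bfold_oriented_coloring_def
  proof (intro conjI ballI allI impI)
    fix x assume x: "x \<in> V"
    then have "i x < card V" using i bij_betwE by fastforce
    then have "b * i x + b \<le> b * card V"
      by (metis add.commute mult.commute mult_le_mono1 Suc_leI mult_Suc)
    then show "f x \<subseteq> {0..<b * card V}" unfolding f_def by auto
    show "card (f x) = b" unfolding f_def by simp
  next
    fix x y assume "(x, y) \<in> A"
    then show "f x \<inter> f y = {}" using AV og dis unfolding oriented_graph_def by (metis mem_Sigma_iff subsetD)
  next
    fix x y z w assume xy: "(x, y) \<in> A" and zw: "(z, w) \<in> A" and ne: "f x \<inter> f w \<noteq> {}"
    have V: "x \<in> V" "y \<in> V" "z \<in> V" "w \<in> V" using xy zw AV by auto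
    have "x = w" using dis[OF V(1) V(4)] ne by blast
    show "f y \<inter> f z = {}"
    proof (rule ccontr)
      assume "f y \<inter> f z \<noteq> {}"
      then have "y = z" using dis[OF V(2) V(3)] by blast
      then show False using xy zw \<open>x = w\<close> og unfolding oriented_graph_def by blast
    qed
  qed
  then show ?thesis by blast
qed

lemma count_bound:
  assumes og: "oriented_graph V A" and f: "bfold_oriented_coloring V A b k f" and b: "b \<ge> 1"
  shows "b * card V \<le> k * alpha_o V A"
proof -
  have fin: "finite V" using og by (simp add: oriented_graph_def)
  have fv: "\<forall>v\<in>V. finite (f v)" using bf1[OF f] finite_subset by blast
  have "b * card V = (\<Sum>v\<in>V. card (f v))" using bf1[OF f] by simp
  also have "\<dots> = card (Sigma V f)" using card_SigmaI[OF fin fv] by simp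
  also have "Sigma V f = (\<lambda>(c,v). (v,c)) ` Sigma {0..<k} (\<lambda>c. {v\<in>V. c \<in> f v})"
    using bf1[OF f] by force
  also have "card \<dots> = card (Sigma {0..<k} (\<lambda>c. {v\<in>V. c \<in> f v}))"
    by (rule card_image) (auto simp: inj_on_def)
  also have "\<dots> = (\<Sum>c\<in>{0..<k}. card {v\<in>V. c \<in> f v})"
    using fin by (subst card_SigmaI) auto
  also have "\<dots> \<le> (\<Sum>c\<in>{0..<k}. alpha_o V A)"
    by (rule sum_mono) (rule card_le_alpha[OF og color_class_indep[OF og f b]])
  also have "\<dots> = k * alpha_o V A" by simp
  finally show ?thesis .
qed

theorem theorem4:
  fixes V :: "'a set" and A :: "('a \<times> 'a) set"
  assumes "oriented_graph V A"
  shows "chi_o_frac V A \<ge> real (card V) / real (alpha_o V A)"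
  unfolding chi_o_frac_def
proof (rule cINF_greatest)
  show "{1::nat..} \<noteq> {}" by auto
next
  fix b :: nat assume "b \<in> {1..}"
  then have b: "b \<ge> 1" by simp
  obtain k0 f0 where k0: "bfold_oriented_coloring V A b k0 f0" using coloring_exists[OF assms] by blast
  have "\<exists>f. bfold_oriented_coloring V A b (chi_o_b b V A) f"
    unfolding chi_o_b_def using LeastI[where P="\<lambda>k. Ex (bfold_oriented_coloring V A b k)" and k=k0] k0 by blast
  then obtain f where f: "bfold_oriented_coloring V A b (chi_o_b b V A) f" by blast
  have le: "b * card V \<le> chi_o_b b V A * alpha_o V A" using count_bound[OF assms f b] .
  show "real (card V) / real (alpha_o V A) \<le> real (chi_o_b b V A) / real b"
  proof (cases "alpha_o V A = 0")
    case True then show ?thesis by simp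
  next
    case False
    have "real b * real (card V) \<le> real (chi_o_b b V A) * real (alpha_o V A)"
      using le by (metis of_nat_le_iff of_nat_mult)
    then show ?thesis using False b by (simp add: field_simps)
  qed
qed

end
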